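(* Let $\tau>0$, let $K\ge 1$ be an integer, and let $v_{max}>0$ and $u_b<0$ be constants. Consider a vehicle with speed bound $\overline v\in(0,v_{max}]$ and acceleration bounds $\underline u\le u_b<0<\overline u$, whose state evolves under the discrete dynamics described in the context. Assume $$K\tau\ \ge\ \frac{v_{max}}{|u_b|}+\tau .$$ Let $(s^0,v^0)$ with $v^0\in[0,\overline v]$ be an initial state and let $(u^k)_{0\le k<K}$ be an admissible control sequence, producing the admissible trajectory $(s^k,v^k)_{0\le k\le K}$. Then there exists an admissible control sequence $(\tilde u^k)_{0\le k\le K}$ with $\tilde u^0=u^0$ such that the corresponding trajectory $(\tilde s^k,\tilde v^k)_{0\le k\le K+1}$ starting from the same initial state $(\tilde s^0,\tilde v^0)=(s^0,v^0)$ satisfies $$\tilde v^K=\tilde v^{K+1}=0\qquad\text{and}\qquad \tilde s^{K+1}\le s^K .$$ (Equivalently, under the associated piecewise-constant acceleration in continuous time, the vehicle is at rest on the whole interval $[K\tau,(K+1)\tau]$ and its position at time $(K+1)\tau$ does not exceed the position of the original trajectory at time $K\tau$.)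
   Context: Time is discretized with step $\tau>0$; a vehicle applies a constant longitudinal acceleration $u^k$ on $[k\tau,(k+1)\tau)$. Its curvilinear position $s^k$ and longitudinal speed $v^k$ at time $k\tau$ obey $$v^{k+1}=v^k+u^k\tau,\qquad s^{k+1}=s^k+\tfrac12\,(v^k+v^{k+1})\,\tau ,$$ which are the exact double-integrator dynamics under piecewise-constant acceleration. A control sequence (and the resulting trajectory) is called admissible if for every index $k$ where it is defined, $u^k\in[\underline u,\overline u]$, and every resulting speed satisfies $v^k\in[0,\overline v]$ (speeds must be nonnegative and bounded by $\overline v$). *)

theory Defs
  imports Complex_Main
begin

fun vel :: "real \<Rightarrow> real \<Rightarrow> (nat \<Rightarrow> real) \<Rightarrow> nat \<Rightarrow> real" where
  "vel tau v0 u 0 = v0"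
| "vel tau v0 u (Suc k) = vel tau v0 u k + u k * tau"

fun pos :: "real \<Rightarrow> real \<Rightarrow> real \<Rightarrow> (nat \<Rightarrow> real) \<Rightarrow> nat \<Rightarrow> real" where
  "pos tau s0 v0 u 0 = s0"
| "pos tau s0 v0 u (Suc k) =
     pos tau s0 v0 u k + (vel tau v0 u k + vel tau v0 u (Suc k)) / 2 * tau"

definition admissible ::
  "real \<Rightarrow> real \<Rightarrow> real \<Rightarrow> real \<Rightarrow> real \<Rightarrow> (nat \<Rightarrow> real) \<Rightarrow> nat \<Rightarrow> bool" where
  "admissible tau ulo uhi vbar v0 u N \<longleftrightarrow>
     (\<forall>k<N. ulo \<le> u k \<and> u k \<le> uhi) \<and>
     (\<forall>k\<le>N. 0 \<le> vel tau v0 u k \<and> vel tau v0 u k \<le> vbar)"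

end

theory Submission
  imports Defs
begin

theorem lemma1:
  fixes tau vmax ub vbar ulo uhi s0 v0 :: real
    and K :: nat and u :: "nat \<Rightarrow> real"
  assumes "tau > 0" and "K \<ge> 1" and "vmax > 0" and "ub < 0"
    and "0 < vbar" and "vbar \<le> vmax"
    and "ulo \<le> ub" and "0 < uhi"
    and "real K * tau \<ge> vmax / \<bar>ub\<bar> + tau"
    and "0 \<le> v0" and "v0 \<le> vbar"
    and "admissible tau ulo uhi vbar v0 u K"
  shows "\<exists>u'. u' 0 = u 0 \<and> admissible tau ulo uhi vbar v0 u' (K + 1)
           \<and> vel tau v0 u' K = 0 \<and> vel tau v0 u' (K + 1) = 0
           \<and> pos tau s0 v0 u' (K + 1) \<le> pos tau s0 v0 u K"
proof -
  note adm = assms(12)[unfolded admissible_def]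
  define v1 where "v1 = v0 + u 0 * tau"
  define w where "w k = (if k = 0 then v0 else max 0 (v1 + (real k - 1) * ulo * tau))" for k :: nat
  define u' where "u' k = (w (Suc k) - w k) / tau" for k
  have v1b: "0 \<le> v1" "v1 \<le> vbar" using adm assms(2) by (auto simp: v1_def dest: spec[of _ 1])
  have velw: "vel tau v0 u' k = w k" for k
  proof (induction k)
    case 0 then show ?case by (simp add: w_def)
  next
    case (Suc k) then show ?case using assms(1) by (simp add: u'_def)
  qed
  have u0: "u' 0 = u 0" using assms(1) v1b
    by (simp add: u'_def w_def v1_def field_simps)
  have wnn: "0 \<le> w k \<and> w k \<le> vbar" for k
  proof (cases k)
    case 0 then show ?thesis using assms(10,11) by (simp add: w_def)
  next
    case (Suc j)
    have "real j * ulo * tau \<le> 0" using assms(1,4,7)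
      by (simp add: mult_nonneg_nonpos mult_nonpos_nonneg)
    then show ?thesis using Suc v1b by (simp add: w_def)
  qed
  have ub1: "u' k \<le> uhi \<and> ulo \<le> u' k" for k
  proof (cases k)
    case 0 then show ?thesis using u0 adm assms(2) by auto
  next
    case (Suc j)
    have a: "w (Suc k) = max 0 (w' + ulo * tau)" "w k = max 0 w'"
      if "w' = v1 + real j * ulo * tau" for w' using Suc that by (auto simp: w_def algebra_simps)
    have "ulo * tau < 0" using assms(1,4,7) by (simp add: mult_neg_pos)
    hence "w (Suc k) - w k \<le> 0" "ulo * tau \<le> w (Suc k) - w k"
      using a[OF refl] by auto
    moreover have "0 < tau * uhi" using assms(1,8) by simp
    ultimately have "w (Suc k) - w k \<le> tau * uhi" "tau * ulo \<le> w (Suc k) - w k" by (auto simp: mult.commute)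
    then show ?thesis using assms(1) by (simp add: u'_def pos_divide_le_eq pos_le_divide_eq mult.commute)
  qed
  have key: "v1 + (real K - 1) * ulo * tau \<le> 0"
  proof -
    have "vmax / \<bar>ub\<bar> \<le> (real K - 1) * tau" using assms(9) by (simp add: algebra_simps)
    hence "vmax \<le> (real K - 1) * tau * (- ub)" using assms(4) by (simp add: field_simps)
    also have "\<dots> \<le> (real K - 1) * tau * (- ulo)"
      using assms(1,2,7) by (intro mult_left_mono) auto
    finally show ?thesis using v1b assms(6) by (simp add: algebra_simps)
  qed
  have wK: "w K = 0" using key assms(2) by (simp add: w_def)
  have wK1: "w (K+1) = 0"
  proof -
    have "ulo * tau < 0" using assms(1,4,7) by (simp add: mult_neg_pos)
    then show ?thesis using key by (simp add: w_def algebra_simps)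
  qed
  have cmp: "k \<le> K \<Longrightarrow> w k \<le> vel tau v0 u k" for k
  proof (induction k)
    case 0 then show ?case by (simp add: w_def)
  next
    case (Suc k)
    show ?case
    proof (cases k)
      case 0 then show ?thesis using v1b by (simp add: w_def v1_def)
    next
      case (Suc j)
      have "ulo \<le> u k" using adm Suc.prems by auto
      hence "ulo * tau \<le> u k * tau" using assms(1) by (simp add: mult_right_mono)
      moreover have "v1 + (real k - 1) * ulo * tau \<le> w k" using Suc by (simp add: w_def)
      moreover have "w k \<le> vel tau v0 u k" using Suc.IH Suc.prems by simp
      moreover have "0 \<le> vel tau v0 u (Suc k)" using adm Suc.prems by blast
      ultimately show ?thesis using Suc by (simp add: w_def algebra_simps)
    qed
  qed
  have pcmp: "k \<le> K \<Longrightarrow> pos tau s0 v0 u' k \<le> pos tau s0 v0 u k" for k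
  proof (induction k)
    case 0 then show ?case by simp
  next
    case (Suc k)
    have "w k + w (Suc k) \<le> vel tau v0 u k + vel tau v0 u (Suc k)"
      using cmp[of k] cmp[of "Suc k"] Suc.prems by simp
    hence "(w k + w (Suc k)) / 2 * tau \<le> (vel tau v0 u k + vel tau v0 u (Suc k)) / 2 * tau"
      using assms(1) by (intro mult_right_mono divide_right_mono) auto
    moreover have "pos tau s0 v0 u' (Suc k) = pos tau s0 v0 u' k + (w k + w (Suc k)) / 2 * tau"
      by (simp only: pos.simps velw)
    moreover have "pos tau s0 v0 u (Suc k) = pos tau s0 v0 u k + (vel tau v0 u k + vel tau v0 u (Suc k)) / 2 * tau"
      by (simp only: pos.simps)
    ultimately show ?case using Suc by linarith
  qed
  show ?thesis
  proof (intro exI conjI)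
    show "u' 0 = u 0" by (rule u0)
    show "admissible tau ulo uhi vbar v0 u' (K + 1)"
      unfolding admissible_def velw using ub1 wnn by auto
    show "vel tau v0 u' K = 0" using velw wK by simp
    show "vel tau v0 u' (K + 1) = 0" using velw[of "K+1"] wK1 by simp
    have "pos tau s0 v0 u' (Suc K) = pos tau s0 v0 u' K + (w K + w (Suc K)) / 2 * tau"
      by (simp only: pos.simps velw)
    then show "pos tau s0 v0 u' (K + 1) \<le> pos tau s0 v0 u K"
      using pcmp[of K] wK wK1 by (simp del: pos.simps)
  qed
qed

end
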